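(* Let $S_u\subseteq[p]$, $S_v\subseteq[q]$ with $|S_u|=s_u$, $|S_v|=s_v$, let $B^\star\in\mathbb R^{p\times q}$ have all nonzero entries in $S_u\times S_v$, assume $n>s_us_v$, $\lambda>0$, and $\sigma_{\min}((\widehat\Sigma_X)_{S_uS_u})>0$, $\sigma_{\min}((\widehat\Sigma_Y)_{S_vS_v})>0$. Let $\tilde B\in\mathbb R^{s_u\times s_v}$ be a minimizer of $$\tfrac12\Big\|\tfrac1nX_{S_u}BY_{S_v}^\top-I_n\Big\|_F^2+\lambda\sum_{i,j}|B_{ij}|$$ and $\tilde\Delta=\tilde B-B^\star_{S_uS_v}$. Then $$\|\tilde\Delta\|_F\le\frac{2\big(\|\widehat\Sigma_{XY}-\widehat\Sigma_XB^\star\widehat\Sigma_Y\|_\infty+\lambda\big)}{\sigma_{\min}((\widehat\Sigma_X)_{S_uS_u})\,\sigma_{\min}((\widehat\Sigma_Y)_{S_vS_v})}\sqrt{s_us_v}.$$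
   Context: $X\in\mathbb R^{n\times p}$, $Y\in\mathbb R^{n\times q}$ are data matrices; $X_{S_u}$ (resp. $Y_{S_v}$) is the submatrix of columns indexed by $S_u$ (resp. $S_v$). $\widehat\Sigma_X=X^\top X/n$, $\widehat\Sigma_Y=Y^\top Y/n$, $\widehat\Sigma_{XY}=X^\top Y/n$. $A_{S_1S_2}$ is the submatrix with rows in $S_1$ and columns in $S_2$; $\|A\|_\infty=\max_{ij}|A_{ij}|$; $\sigma_{\min}$ is the smallest singular value. *)

theory Defs
  imports "Jordan_Normal_Form.DL_Rank_Submatrix" "Jordan_Normal_Form.Char_Poly"
begin

text \<open>Matrices are Jordan_Normal_Form matrices (real mat), indices 0-based.
  Column selection X_S is submatrix X {..<dim_row X} S.\<close>

definition frob_norm :: "real mat \<Rightarrow> real" where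
  "frob_norm A = sqrt (\<Sum>i<dim_row A. \<Sum>j<dim_col A. (A $$ (i,j))\<^sup>2)"

definition max_abs_norm :: "real mat \<Rightarrow> real" where
  "max_abs_norm A = Max ({0} \<union> {\<bar>A $$ (i,j)\<bar> | i j. i < dim_row A \<and> j < dim_col A})"

definition l1_entry_norm :: "real mat \<Rightarrow> real" where
  "l1_entry_norm A = (\<Sum>i<dim_row A. \<Sum>j<dim_col A. \<bar>A $$ (i,j)\<bar>)"

text \<open>Smallest singular value: square root of the smallest eigenvalue of A^T A
  (A has at least as many rows as columns in all uses below; they are square).\<close>
definition sigma_min :: "real mat \<Rightarrow> real" where
  "sigma_min A = sqrt (Min {e. eigenvalue (transpose_mat A * A) e})"

definition cols :: "real mat \<Rightarrow> nat set \<Rightarrow> real mat" where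
  "cols X S = submatrix X {..<dim_row X} S"

definition sample_cov :: "real mat \<Rightarrow> real mat \<Rightarrow> real mat" where
  "sample_cov X Y = (1 / real (dim_row X)) \<cdot>\<^sub>m (transpose_mat X * Y)"

definition cca_objective :: "real mat \<Rightarrow> real mat \<Rightarrow> real \<Rightarrow> real mat \<Rightarrow> real" where
  "cca_objective XS YS lam B =
     (1/2) * (frob_norm ((1 / real (dim_row XS)) \<cdot>\<^sub>m (XS * B * transpose_mat YS)
                          - 1\<^sub>m (dim_row XS)))\<^sup>2 + lam * l1_entry_norm B"

end

theory Submission
  imports Defs
begin

lemma discr:
  fixes a b c :: real
  assumes "\<forall>t. 0 \<le> a + 2*b*t + c*t^2" and "c \<ge> 0"
  shows "b^2 \<le> a*c"
proof (cases "c = 0")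
  case True
  show ?thesis
  proof (cases "b = 0")
    case False
    have "0 \<le> a + 2*b*(-(\<bar>a\<bar>+1)/(2*b)) + c*(-(\<bar>a\<bar>+1)/(2*b))^2" using assms(1) by blast
    also have "\<dots> = a - (\<bar>a\<bar>+1)" using False True by (simp add: field_simps)
    finally show ?thesis by simp
  qed (use True in simp)
next
  case False
  hence c: "c > 0" using assms(2) by simp
  have "0 \<le> a + 2*b*(-b/c) + c*(-b/c)^2" using assms(1) by blast
  also have "\<dots> = a - b^2/c" using c by (simp add: field_simps power2_eq_square)
  finally have "b^2/c \<le> a" by simp
  thus ?thesis using c by (simp add: field_simps mult.commute)
qed

definition ip :: "nat \<Rightarrow> (nat \<Rightarrow> real) \<Rightarrow> (nat \<Rightarrow> real) \<Rightarrow> real" where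
  "ip k x y = (\<Sum>i<k. x i * y i)"
definition mv :: "real mat \<Rightarrow> nat \<Rightarrow> (nat \<Rightarrow> real) \<Rightarrow> nat \<Rightarrow> real" where
  "mv A k x = (\<lambda>i. \<Sum>j<k. A $$ (i,j) * x j)"
definition qf :: "real mat \<Rightarrow> nat \<Rightarrow> (nat \<Rightarrow> real) \<Rightarrow> (nat \<Rightarrow> real) \<Rightarrow> real" where
  "qf A k x y = ip k x (mv A k y)"

lemma ip_ge0: "ip k x x \<ge> 0"
  unfolding ip_def by (intro sum_nonneg) auto

lemma ip_comm: "ip k x y = ip k y x"
  unfolding ip_def by (simp add: mult.commute)

lemma ip_add_right: "ip k x (\<lambda>i. y i + z i) = ip k x y + ip k x z"
  unfolding ip_def by (simp add: algebra_simps sum.distrib)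
lemma ip_add_left: "ip k (\<lambda>i. y i + z i) x = ip k y x + ip k z x"
  unfolding ip_def by (simp add: algebra_simps sum.distrib)
lemma ip_smult_right: "ip k x (\<lambda>i. t * y i) = t * ip k x y"
  unfolding ip_def by (simp add: algebra_simps sum_distrib_left)
lemma ip_smult_left: "ip k (\<lambda>i. t * y i) x = t * ip k y x"
  unfolding ip_def by (simp add: algebra_simps sum_distrib_left)

lemma mv_add: "mv A k (\<lambda>i. y i + z i) = (\<lambda>i. mv A k y i + mv A k z i)"
  unfolding mv_def by (simp add: algebra_simps sum.distrib)
lemma mv_smult: "mv A k (\<lambda>i. t * y i) = (\<lambda>i. t * mv A k y i)"
  unfolding mv_def by (simp add: algebra_simps sum_distrib_left)

lemma qf_sym:
  assumes "\<And>i j. i < k \<Longrightarrow> j < k \<Longrightarrow> A $$ (i,j) = A $$ (j,i)"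
  shows "qf A k x y = qf A k y x"
proof -
  have "qf A k x y = (\<Sum>i<k. \<Sum>j<k. x i * A $$ (i,j) * y j)"
    unfolding qf_def ip_def mv_def by (simp add: sum_distrib_left algebra_simps)
  also have "\<dots> = (\<Sum>j<k. \<Sum>i<k. x i * A $$ (i,j) * y j)" by (rule sum.swap)
  also have "\<dots> = (\<Sum>j<k. \<Sum>i<k. y j * A $$ (j,i) * x i)"
    using assms by (intro sum.cong refl) (simp add: algebra_simps)
  also have "\<dots> = qf A k y x"
    unfolding qf_def ip_def mv_def by (simp add: sum_distrib_left algebra_simps)
  finally show ?thesis .
qed

lemma qf_expand:
  assumes "\<And>i j. i < k \<Longrightarrow> j < k \<Longrightarrow> A $$ (i,j) = A $$ (j,i)"
  shows "qf A k (\<lambda>i. x i + t * y i) (\<lambda>i. x i + t * y i)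
     = qf A k x x + 2 * qf A k x y * t + qf A k y y * t^2"
proof -
  have s: "qf A k y x = qf A k x y" using qf_sym[OF assms] by blast
  show ?thesis
    unfolding qf_def mv_add mv_smult ip_add_left ip_add_right ip_smult_left ip_smult_right
    using s unfolding qf_def by (simp add: algebra_simps power2_eq_square)
qed

lemma psd_cs:
  assumes sym: "\<And>i j. i < k \<Longrightarrow> j < k \<Longrightarrow> A $$ (i,j) = A $$ (j,i)"
    and psd: "\<And>z. qf A k z z \<ge> 0"
  shows "(qf A k x y)^2 \<le> qf A k x x * qf A k y y"
  apply (rule discr)
  using psd qf_expand[OF sym, where x=x and y=y, symmetric] by (auto simp: algebra_simps)

lemma cs: "(ip k x y)^2 \<le> ip k x x * ip k y y"
proof (rule discr)
  show "\<forall>t. 0 \<le> ip k x x + 2 * ip k x y * t + ip k y y * t^2"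
  proof
    fix t
    have "0 \<le> ip k (\<lambda>i. x i + t * y i) (\<lambda>i. x i + t * y i)" by (rule ip_ge0)
    also have "\<dots> = ip k x x + 2 * ip k x y * t + ip k y y * t^2"
      unfolding ip_add_left ip_add_right ip_smult_left ip_smult_right
      using ip_comm[of k x y] by (simp add: algebra_simps power2_eq_square)
    finally show "0 \<le> ip k x x + 2 * ip k x y * t + ip k y y * t^2" .
  qed
qed (rule ip_ge0)

definition fro :: "real mat \<Rightarrow> nat \<Rightarrow> real" where
  "fro A k = (\<Sum>i<k. \<Sum>j<k. (A $$ (i,j))^2)"

lemma mv_bound: "ip k (mv A k x) (mv A k x) \<le> fro A k * ip k x x"
proof -
  have "ip k (mv A k x) (mv A k x) = (\<Sum>i<k. (ip k (\<lambda>j. A $$ (i,j)) x)^2)"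
    unfolding ip_def mv_def by (simp add: power2_eq_square)
  also have "\<dots> \<le> (\<Sum>i<k. ip k (\<lambda>j. A $$ (i,j)) (\<lambda>j. A $$ (i,j)) * ip k x x)"
    by (intro sum_mono cs)
  also have "\<dots> = fro A k * ip k x x"
    unfolding fro_def ip_def by (simp add: sum_distrib_right power2_eq_square)
  finally show ?thesis .
qed

lemma ip_zero: "ip k x x = 0 \<Longrightarrow> i < k \<Longrightarrow> x i = 0"
  unfolding ip_def using sum_nonneg_eq_0_iff[of "{..<k}" "\<lambda>i. x i * x i"] by auto

lemma ip_cong: "(\<And>i. i < k \<Longrightarrow> x i = x' i) \<Longrightarrow> (\<And>i. i < k \<Longrightarrow> y i = y' i) \<Longrightarrow> ip k x y = ip k x' y'"
  unfolding ip_def by (intro sum.cong) auto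

lemma mv_mult:
  assumes "C \<in> carrier_mat k k" "B \<in> carrier_mat k k" "i < k"
  shows "mv C k (mv B k x) i = mv (C * B) k x i"
proof -
  have "mv C k (mv B k x) i = (\<Sum>j<k. \<Sum>l<k. C $$ (i,j) * B $$ (j,l) * x l)"
    unfolding mv_def by (simp add: sum_distrib_left algebra_simps)
  also have "\<dots> = (\<Sum>l<k. \<Sum>j<k. C $$ (i,j) * B $$ (j,l) * x l)" by (rule sum.swap)
  also have "\<dots> = mv (C * B) k x i"
    unfolding mv_def using assms
    by (intro sum.cong refl) (simp add: scalar_prod_def sum_distrib_right lessThan_atLeast0)
  finally show ?thesis .
qed

lemma mv_one: assumes "i < k" shows "mv (1\<^sub>m k) k x i = x i"
proof -
  have "mv (1\<^sub>m k) k x i = (\<Sum>j<k. if j = i then x j else 0)"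
    unfolding mv_def using assms by (intro sum.cong) auto
  thus ?thesis using assms by simp
qed

lemma min_eig:
  assumes A: "A \<in> carrier_mat k k" and k: "k > 0"
    and sym: "\<And>i j. i < k \<Longrightarrow> j < k \<Longrightarrow> A $$ (i,j) = A $$ (j,i)"
    and psd: "\<And>z. qf A k z z \<ge> 0"
  shows "\<exists>\<mu>\<ge>0. (\<forall>x. qf A k x x \<ge> \<mu> * ip k x x) \<and> eigenvalue A \<mu>"
proof -
  define S where "S = {qf A k x x | x. ip k x x = 1}"
  define e0 :: "nat \<Rightarrow> real" where "e0 = (\<lambda>i. if i = 0 then 1 else 0)"
  have "ip k e0 e0 = 1" unfolding ip_def e0_def using k by (simp add: if_distrib cong: if_cong)
  hence Sne: "S \<noteq> {}" unfolding S_def by blast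
  have bdd: "bdd_below S" unfolding S_def bdd_below_def using psd by blast
  define \<mu> where "\<mu> = Inf S"
  have mu0: "\<mu> \<ge> 0" unfolding \<mu>_def using Sne psd by (intro cInf_greatest) (auto simp: S_def)
  have low: "qf A k x x \<ge> \<mu> * ip k x x" for x
  proof (cases "ip k x x = 0")
    case True
    hence "qf A k x x = 0" unfolding qf_def ip_def using ip_zero[OF True] by simp
    thus ?thesis using True by simp
  next
    case False
    hence pos: "ip k x x > 0" using ip_ge0[of k x] by simp
    define c where "c = 1 / sqrt (ip k x x)"
    have c2: "c^2 * ip k x x = 1" unfolding c_def using pos by (simp add: power_divide)
    define y where "y = (\<lambda>i. c * x i)"
    have "ip k y y = c^2 * ip k x x" unfolding y_def ip_smult_left ip_smult_right
      by (simp add: power2_eq_square)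
    hence "qf A k y y \<in> S" unfolding S_def using c2 by auto
    hence "\<mu> \<le> qf A k y y" unfolding \<mu>_def using bdd by (rule cInf_lower)
    also have "qf A k y y = c^2 * qf A k x x" unfolding y_def qf_def mv_smult ip_smult_left ip_smult_right
      by (simp add: power2_eq_square)
    finally have "\<mu> * ip k x x \<le> c^2 * qf A k x x * ip k x x" using pos by simp
    also have "\<dots> = qf A k x x" using c2 by (simp add: algebra_simps)
    finally show ?thesis .
  qed
  define B where "B = char_matrix A \<mu>"
  have Bc: "B \<in> carrier_mat k k" unfolding B_def char_matrix_def using A by auto
  have Bij: "B $$ (i,j) = A $$ (i,j) - \<mu> * (if i = j then 1 else 0)" if "i < k" "j < k" for i j
    unfolding B_def char_matrix_def using A that by auto
  have mvB: "mv B k x i = mv A k x i - \<mu> * x i" if "i < k" for x i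
  proof -
    have "mv B k x i = (\<Sum>j<k. A $$ (i,j) * x j - \<mu> * (if j = i then x j else 0))"
      unfolding mv_def using that by (intro sum.cong) (auto simp: Bij algebra_simps)
    also have "\<dots> = mv A k x i - \<mu> * (\<Sum>j<k. if j = i then x j else 0)"
      unfolding mv_def sum_subtractf sum_distrib_left ..
    finally show ?thesis using that by simp
  qed
  have qfB: "qf B k x y = qf A k x y - \<mu> * ip k x y" for x y
  proof -
    have "qf B k x y = ip k x (\<lambda>i. mv A k y i + (-\<mu>) * y i)"
      unfolding qf_def by (intro ip_cong) (auto simp: mvB)
    thus ?thesis unfolding ip_add_right ip_smult_right qf_def by simp
  qed
  have symB: "B $$ (i,j) = B $$ (j,i)" if "i < k" "j < k" for i j
    using that by (simp add: Bij sym)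
  have psdB: "qf B k z z \<ge> 0" for z using low[of z] qfB[of z z] by simp
  have "det B = 0"
  proof (rule ccontr)
    assume "det B \<noteq> 0"
    from det_non_zero_imp_unit[OF Bc this, of "()"]
    obtain C where C: "C \<in> carrier_mat k k" and CB: "C * B = 1\<^sub>m k"
      unfolding Units_def ring_mat_def by auto
    define Fb where "Fb = fro B k"
    define Fc where "Fc = fro C k"
    have Fc0: "Fc \<ge> 0" unfolding Fc_def fro_def by (intro sum_nonneg) auto
    define K where "K = Fc^2 * Fb"
    have key: "1 \<le> K * (qf B k x x)^2" if x1: "ip k x x = 1" for x
    proof -
      define u where "u = mv B k x"
      define s where "s = ip k u u"
      define q where "q = qf B k x x"
      define r where "r = qf B k u u"
      have q0: "q \<ge> 0" "r \<ge> 0" unfolding q_def r_def by (rule psdB)+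
      have "s = qf B k u x" unfolding s_def qf_def u_def ..
      hence "s^2 \<le> r * q" unfolding r_def q_def by (metis psd_cs symB psdB)
      hence s4: "s^2 * s^2 \<le> (r*r) * (q*q)" using q0 mult_mono[of "s^2" "r*q" "s^2" "r*q"]
        by (simp add: algebra_simps)
      have "r^2 \<le> s * ip k (mv B k u) (mv B k u)" unfolding r_def qf_def s_def by (rule cs)
      also have "\<dots> \<le> s * (Fb * s)" unfolding Fb_def s_def
        by (intro mult_left_mono mv_bound ip_ge0)
      finally have r2: "r*r \<le> Fb * (s*s)" by (simp add: power2_eq_square algebra_simps)
      have "ip k x x = ip k (mv C k u) (mv C k u)"
        unfolding u_def by (intro ip_cong) (simp_all add: mv_mult[OF C Bc] CB mv_one)
      also have "\<dots> \<le> Fc * s" unfolding Fc_def s_def by (rule mv_bound)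
      finally have s1: "1 \<le> Fc * s" using x1 by simp
      have s0: "s \<ge> 0" unfolding s_def by (rule ip_ge0)
      have spos: "s > 0"
      proof (rule ccontr)
        assume "\<not> s > 0" hence "s = 0" using s0 by simp
        thus False using s1 by simp
      qed
      have "s^2 * s^2 \<le> (Fb * (s*s)) * (q*q)"
        using s4 r2 by (meson order_trans mult_right_mono zero_le_square)
      hence "s^2 \<le> Fb * q^2" using spos by (simp add: power2_eq_square algebra_simps)
      hence "Fc^2 * s^2 \<le> Fc^2 * (Fb * q^2)" by (simp add: mult_left_mono)
      moreover have "1 \<le> Fc^2 * s^2"
        using s1 by (metis one_le_power power_mult_distrib)
      ultimately show ?thesis unfolding K_def q_def by (simp add: algebra_simps)
    qed
    have K0: "K \<ge> 0"
      using key[OF \<open>ip k e0 e0 = 1\<close>] by (smt (verit) mult_nonpos_nonneg zero_le_power2)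
    define \<epsilon> where "\<epsilon> = 1 / (K + 1)"
    have eps: "\<epsilon> > 0" unfolding \<epsilon>_def using K0 by simp
    have "Inf S < \<mu> + \<epsilon>" unfolding \<mu>_def using eps by simp
    then obtain v where "v \<in> S" "v < \<mu> + \<epsilon>" using cInf_less_iff[OF Sne bdd] by blast
    then obtain x where x1: "ip k x x = 1" and lt: "qf A k x x < \<mu> + \<epsilon>" unfolding S_def by auto
    have q: "qf B k x x = qf A k x x - \<mu>" using qfB[of x x] x1 by simp
    have q0: "qf B k x x \<ge> 0" by (rule psdB)
    have qe: "qf B k x x < \<epsilon>" using q lt by simp
    have "(qf B k x x)^2 \<le> \<epsilon>^2" using q0 qe by (intro power_mono) auto
    hence "K * (qf B k x x)^2 \<le> K * \<epsilon>^2" using K0 by (simp add: mult_left_mono)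
    also have "K * \<epsilon>^2 < 1"
    proof -
      have e1: "\<epsilon> \<le> 1" unfolding \<epsilon>_def using K0 by simp
      have "\<epsilon>^2 \<le> \<epsilon>" using e1 eps by (simp add: power2_eq_square mult_left_le)
      hence "K * \<epsilon>^2 \<le> K * \<epsilon>" using K0 by (simp add: mult_left_mono)
      also have "K * \<epsilon> = K / (K + 1)" unfolding \<epsilon>_def by simp
      also have "\<dots> < 1" using K0 by simp
      finally show ?thesis .
    qed
    finally show False using key[OF x1] by simp
  qed
  hence "eigenvalue A \<mu>" unfolding B_def using eigenvalue_det[OF A] by simp
  thus ?thesis using mu0 low by blast
qed

lemma sigma_bound:
  assumes A: "A \<in> carrier_mat k k" and k: "k > 0"
    and sym: "\<And>i j. i < k \<Longrightarrow> j < k \<Longrightarrow> A $$ (i,j) = A $$ (j,i)"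
    and psd: "\<And>z. qf A k z z \<ge> 0"
  shows "qf A k x x \<ge> sigma_min A * ip k x x"
proof -
  obtain \<mu> where mu0: "\<mu> \<ge> 0" and low: "\<And>x. qf A k x x \<ge> \<mu> * ip k x x"
    and ev: "eigenvalue A \<mu>" using min_eig[OF A k sym psd] by blast
  from ev obtain v where v: "v \<in> carrier_vec k" and Av: "A *\<^sub>v v = \<mu> \<cdot>\<^sub>v v" and v0: "v \<noteq> 0\<^sub>v k"
    unfolding eigenvalue_def eigenvector_def using A by auto
  have AT: "transpose_mat A = A" using A sym by (intro eq_matI) auto
  define M where "M = transpose_mat A * A"
  have M: "M \<in> carrier_mat k k" unfolding M_def using A by auto
  have "M *\<^sub>v v = (\<mu>^2) \<cdot>\<^sub>v v"
    unfolding M_def AT using A v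
    by (simp add: Av mult_mat_vec[OF A v] smult_smult_assoc power2_eq_square)
  hence evM: "eigenvalue M (\<mu>^2)" unfolding eigenvalue_def eigenvector_def using v v0 M by auto
  have "{e. eigenvalue M e} = {e. poly (char_poly M) e = 0}"
    using eigenvalue_root_char_poly[OF M] by auto
  moreover have "char_poly M \<noteq> 0" using degree_monic_char_poly[OF M] by auto
  ultimately have fin: "finite {e. eigenvalue M e}" using poly_roots_finite by simp
  have "Min {e. eigenvalue M e} \<le> \<mu>^2" using fin evM by (intro Min_le) auto
  hence "sigma_min A \<le> \<mu>" unfolding sigma_min_def M_def[symmetric]
    using mu0 real_sqrt_le_mono by fastforce
  hence "sigma_min A * ip k x x \<le> \<mu> * ip k x x" by (intro mult_right_mono ip_ge0)
  also have "\<dots> \<le> qf A k x x" by (rule low)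
  finally show ?thesis .
qed

lemma cs_set:
  fixes f g :: "'a \<Rightarrow> real"
  shows "(\<Sum>s\<in>S. f s * g s)^2 \<le> (\<Sum>s\<in>S. (f s)^2) * (\<Sum>s\<in>S. (g s)^2)"
proof (rule discr)
  show "\<forall>t. 0 \<le> (\<Sum>s\<in>S. (f s)^2) + 2 * (\<Sum>s\<in>S. f s * g s) * t + (\<Sum>s\<in>S. (g s)^2) * t^2"
  proof
    fix t
    have "0 \<le> (\<Sum>s\<in>S. (f s + t * g s)^2)" by (intro sum_nonneg) auto
    also have "\<dots> = (\<Sum>s\<in>S. (f s)^2) + 2 * (\<Sum>s\<in>S. f s * g s) * t + (\<Sum>s\<in>S. (g s)^2) * t^2"
      by (simp add: power2_eq_square algebra_simps sum.distrib sum_distrib_left sum_distrib_right)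
    finally show "0 \<le> (\<Sum>s\<in>S. (f s)^2) + 2 * (\<Sum>s\<in>S. f s * g s) * t + (\<Sum>s\<in>S. (g s)^2) * t^2" .
  qed
qed (intro sum_nonneg, auto)

lemma l1_bound:
  fixes D :: "nat \<Rightarrow> nat \<Rightarrow> real"
  shows "(\<Sum>i<k. \<Sum>j<l. \<bar>D i j\<bar>) \<le> sqrt (real (k * l)) * sqrt (\<Sum>i<k. \<Sum>j<l. (D i j)^2)"
proof -
  let ?S = "{..<k} \<times> {..<l}"
  have e1: "(\<Sum>i<k. \<Sum>j<l. \<bar>D i j\<bar>) = (\<Sum>p\<in>?S. \<bar>D (fst p) (snd p)\<bar> * 1)"
    by (simp add: sum.cartesian_product case_prod_unfold)
  have e2: "(\<Sum>i<k. \<Sum>j<l. (D i j)^2) = (\<Sum>p\<in>?S. \<bar>D (fst p) (snd p)\<bar>^2)"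
    by (simp add: sum.cartesian_product case_prod_unfold)
  have e3: "real (k * l) = (\<Sum>p\<in>?S. (1::real)^2)" by simp
  have "(\<Sum>i<k. \<Sum>j<l. \<bar>D i j\<bar>)^2 \<le> real (k*l) * (\<Sum>i<k. \<Sum>j<l. (D i j)^2)"
    unfolding e1 e2 e3 using cs_set[of "\<lambda>p. \<bar>D (fst p) (snd p)\<bar>" "\<lambda>_. 1" ?S]
    by (simp add: mult.commute)
  hence "sqrt ((\<Sum>i<k. \<Sum>j<l. \<bar>D i j\<bar>)^2) \<le> sqrt (real (k*l) * (\<Sum>i<k. \<Sum>j<l. (D i j)^2))"
    by (rule real_sqrt_le_mono)
  moreover have "(\<Sum>i<k. \<Sum>j<l. \<bar>D i j\<bar>) \<ge> 0" by (intro sum_nonneg) auto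
  ultimately show ?thesis by (simp add: real_sqrt_mult)
qed

definition TT :: "nat \<Rightarrow> nat \<Rightarrow> (nat \<Rightarrow> nat \<Rightarrow> real) \<Rightarrow> (nat \<Rightarrow> nat \<Rightarrow> real) \<Rightarrow> (nat \<Rightarrow> nat \<Rightarrow> real) \<Rightarrow> nat \<Rightarrow> nat \<Rightarrow> real" where
  "TT k l x y B a b = (\<Sum>i<k. \<Sum>j<l. x a i * B i j * y b j)"

definition objf :: "nat \<Rightarrow> nat \<Rightarrow> nat \<Rightarrow> real \<Rightarrow> (nat \<Rightarrow> nat \<Rightarrow> real) \<Rightarrow> (nat \<Rightarrow> nat \<Rightarrow> real) \<Rightarrow> (nat \<Rightarrow> nat \<Rightarrow> real) \<Rightarrow> real" where
  "objf n k l lam x y B = 1/2 * (\<Sum>a<n. \<Sum>b<n. (TT k l x y B a b / real n - (if a = b then 1 else 0))^2)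
      + lam * (\<Sum>i<k. \<Sum>j<l. \<bar>B i j\<bar>)"

lemma objf_cong:
  assumes "\<And>i j. i < k \<Longrightarrow> j < l \<Longrightarrow> B i j = B' i j"
  shows "objf n k l lam x y B = objf n k l lam x y B'"
proof -
  have "TT k l x y B = TT k l x y B'" unfolding TT_def using assms by (intro ext sum.cong refl) auto
  moreover have "(\<Sum>i<k. \<Sum>j<l. \<bar>B i j\<bar>) = (\<Sum>i<k. \<Sum>j<l. \<bar>B' i j\<bar>)" using assms by (intro sum.cong refl) auto
  ultimately show ?thesis unfolding objf_def by simp
qed

lemma TT_add: "TT k l x y (\<lambda>i j. B i j + D i j) a b = TT k l x y B a b + TT k l x y D a b"
  unfolding TT_def by (simp add: algebra_simps sum.distrib)

lemma swap4:
  fixes f :: "nat \<Rightarrow> nat \<Rightarrow> nat \<Rightarrow> nat \<Rightarrow> real"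
  shows "(\<Sum>a<n. \<Sum>b<m. \<Sum>i<k. \<Sum>j<l. f a b i j) = (\<Sum>i<k. \<Sum>j<l. \<Sum>a<n. \<Sum>b<m. f a b i j)"
proof -
  have "(\<Sum>a<n. \<Sum>b<m. \<Sum>i<k. \<Sum>j<l. f a b i j) = (\<Sum>a<n. \<Sum>i<k. \<Sum>b<m. \<Sum>j<l. f a b i j)"
    by (rule sum.cong[OF refl], rule sum.swap)
  also have "\<dots> = (\<Sum>i<k. \<Sum>a<n. \<Sum>b<m. \<Sum>j<l. f a b i j)" by (rule sum.swap)
  also have "\<dots> = (\<Sum>i<k. \<Sum>a<n. \<Sum>j<l. \<Sum>b<m. f a b i j)"
    by (rule sum.cong[OF refl], rule sum.cong[OF refl], rule sum.swap)
  also have "\<dots> = (\<Sum>i<k. \<Sum>j<l. \<Sum>a<n. \<Sum>b<m. f a b i j)"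
    by (rule sum.cong[OF refl], rule sum.swap)
  finally show ?thesis .
qed

lemma core:
  fixes x y Bt B0 :: "nat \<Rightarrow> nat \<Rightarrow> real"
  assumes n: "n > 0" and lam: "lam \<ge> 0" and g: "g \<ge> 0"
    and opt: "objf n k l lam x y Bt \<le> objf n k l lam x y B0"
    and Gb: "\<And>i j. i < k \<Longrightarrow> j < l \<Longrightarrow>
       \<bar>(\<Sum>a<n. \<Sum>b<n. (TT k l x y B0 a b / real n - (if a = b then 1 else 0)) * x a i * y b j) / real n\<bar> \<le> g"
    and sx: "sx > 0" and sy: "sy > 0"
    and hx: "\<And>z. real n * sx * (\<Sum>i<k. (z i)^2) \<le> (\<Sum>a<n. (\<Sum>i<k. x a i * z i)^2)"
    and hy: "\<And>z. real n * sy * (\<Sum>j<l. (z j)^2) \<le> (\<Sum>b<n. (\<Sum>j<l. y b j * z j)^2)"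
  shows "sqrt (\<Sum>i<k. \<Sum>j<l. (Bt i j - B0 i j)^2) \<le> 2 * (g + lam) / (sx * sy) * sqrt (real (k * l))"
proof -
  define D where "D = (\<lambda>i j. Bt i j - B0 i j)"
  define R0 where "R0 = (\<lambda>a b. TT k l x y B0 a b / real n - (if a = b then 1 else 0::real))"
  define TD where "TD = (\<lambda>a b. TT k l x y D a b / real n)"
  define G where "G = (\<lambda>i j. (\<Sum>a<n. \<Sum>b<n. R0 a b * x a i * y b j) / real n)"
  define S1 where "S1 = (\<Sum>a<n. \<Sum>b<n. R0 a b * TD a b)"
  define Q where "Q = (\<Sum>a<n. \<Sum>b<n. (TD a b)^2)"
  define F where "F = (\<Sum>i<k. \<Sum>j<l. (D i j)^2)"
  define L1 where "L1 = (\<lambda>B. \<Sum>i<k. \<Sum>j<l. \<bar>B i j\<bar> :: real)"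
  have BtD: "Bt = (\<lambda>i j. B0 i j + D i j)" unfolding D_def by auto
  have Rt: "TT k l x y Bt a b / real n - (if a = b then 1 else 0) = R0 a b + TD a b" for a b
    unfolding BtD TT_add R0_def TD_def by (simp add: add_divide_distrib)
  have sq: "(\<Sum>a<n. \<Sum>b<n. (R0 a b + TD a b)^2) = (\<Sum>a<n. \<Sum>b<n. (R0 a b)^2) + 2 * S1 + Q"
    unfolding S1_def Q_def by (simp add: power2_eq_square algebra_simps sum.distrib sum_distrib_left)
  have objt: "objf n k l lam x y Bt = 1/2 * ((\<Sum>a<n. \<Sum>b<n. (R0 a b)^2) + 2 * S1 + Q) + lam * L1 Bt"
    unfolding objf_def Rt sq L1_def ..
  have obj0: "objf n k l lam x y B0 = 1/2 * (\<Sum>a<n. \<Sum>b<n. (R0 a b)^2) + lam * L1 B0"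
    unfolding objf_def R0_def L1_def ..
  have S1G: "S1 = (\<Sum>i<k. \<Sum>j<l. D i j * G i j)"
  proof -
    have "S1 = (\<Sum>a<n. \<Sum>b<n. \<Sum>i<k. \<Sum>j<l. R0 a b * x a i * D i j * y b j / real n)"
      unfolding S1_def TD_def TT_def by (simp add: sum_distrib_left sum_divide_distrib algebra_simps)
    also have "\<dots> = (\<Sum>i<k. \<Sum>j<l. \<Sum>a<n. \<Sum>b<n. R0 a b * x a i * D i j * y b j / real n)"
      by (rule swap4)
    also have "\<dots> = (\<Sum>i<k. \<Sum>j<l. D i j * G i j)"
      unfolding G_def by (simp add: sum_distrib_left sum_divide_distrib algebra_simps)
    finally show ?thesis .
  qed
  have S1b: "- S1 \<le> g * L1 D"
  proof -
    have "- S1 = (\<Sum>i<k. \<Sum>j<l. - (D i j * G i j))" unfolding S1G by (simp add: sum_negf)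
    also have "\<dots> \<le> (\<Sum>i<k. \<Sum>j<l. g * \<bar>D i j\<bar>)"
    proof (intro sum_mono)
      fix i j assume "i \<in> {..<k}" "j \<in> {..<l}"
      hence "\<bar>G i j\<bar> \<le> g" using Gb[of i j] unfolding G_def R0_def by auto
      hence "\<bar>D i j\<bar> * \<bar>G i j\<bar> \<le> \<bar>D i j\<bar> * g" by (intro mult_left_mono) auto
      moreover have "- (D i j * G i j) \<le> \<bar>D i j\<bar> * \<bar>G i j\<bar>"
        unfolding abs_mult[symmetric] by (rule abs_ge_minus_self)
      ultimately show "- (D i j * G i j) \<le> g * \<bar>D i j\<bar>" by (simp add: mult.commute)
    qed
    also have "\<dots> = g * L1 D" unfolding L1_def by (simp add: sum_distrib_left)
    finally show ?thesis .
  qed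
  have L1b: "L1 B0 - L1 Bt \<le> L1 D"
  proof -
    have "L1 B0 \<le> (\<Sum>i<k. \<Sum>j<l. \<bar>Bt i j\<bar> + \<bar>D i j\<bar>)"
      unfolding L1_def D_def by (intro sum_mono) auto
    thus ?thesis unfolding L1_def by (simp add: sum.distrib)
  qed
  have L1D0: "L1 D \<ge> 0" unfolding L1_def by (intro sum_nonneg) auto
  have Qb: "Q / 2 \<le> (g + lam) * L1 D"
  proof -
    have "1/2 * Q \<le> - S1 + lam * (L1 B0 - L1 Bt)" using opt unfolding objt obj0 by (simp add: algebra_simps)
    also have "\<dots> \<le> g * L1 D + lam * L1 D" using S1b L1b lam by (intro add_mono mult_left_mono) auto
    finally show ?thesis by (simp add: algebra_simps)
  qed
  define W where "W = (\<lambda>i b. \<Sum>j<l. y b j * D i j)"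
  have TDW: "TT k l x y D a b = (\<Sum>i<k. x a i * W i b)" for a b
    unfolding TT_def W_def by (simp add: sum_distrib_left algebra_simps)
  have "real n * sx * (real n * sy * F) = real n * sx * (\<Sum>i<k. real n * sy * (\<Sum>j<l. (D i j)^2))"
    unfolding F_def by (simp add: sum_distrib_left)
  also have "\<dots> \<le> real n * sx * (\<Sum>i<k. \<Sum>b<n. (W i b)^2)"
    using sx n unfolding W_def by (intro mult_left_mono sum_mono hy) auto
  also have "\<dots> = real n * sx * (\<Sum>b<n. \<Sum>i<k. (W i b)^2)" by (simp add: sum.swap[of _ "{..<k}"])
  also have "\<dots> = (\<Sum>b<n. real n * sx * (\<Sum>i<k. (W i b)^2))" by (simp add: sum_distrib_left)
  also have "\<dots> \<le> (\<Sum>b<n. \<Sum>a<n. (\<Sum>i<k. x a i * W i b)^2)" by (intro sum_mono hx)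
  also have "\<dots> = (\<Sum>a<n. \<Sum>b<n. (TT k l x y D a b)^2)" unfolding TDW by (rule sum.swap)
  also have "\<dots> = real n ^ 2 * Q" unfolding Q_def TD_def using n
    by (simp add: sum_distrib_left power_divide)
  finally have "real n ^ 2 * (sx * sy * F) \<le> real n ^ 2 * Q" by (simp add: power2_eq_square algebra_simps)
  hence QF: "sx * sy * F \<le> Q" using n by simp
  have F0: "F \<ge> 0" unfolding F_def by (intro sum_nonneg) auto
  have L1F: "L1 D \<le> sqrt (real (k * l)) * sqrt F" unfolding L1_def F_def by (rule l1_bound)
  have main: "sx * sy * F / 2 \<le> (g + lam) * sqrt (real (k * l)) * sqrt F"
  proof -
    have "sx * sy * F / 2 \<le> (g + lam) * L1 D" using QF Qb by simp
    also have "\<dots> \<le> (g + lam) * (sqrt (real (k * l)) * sqrt F)" using L1F g lam by (intro mult_left_mono) auto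
    finally show ?thesis by (simp add: algebra_simps)
  qed
  have goal: "sqrt F \<le> 2 * (g + lam) / (sx * sy) * sqrt (real (k * l))"
  proof (cases "F = 0")
    case True thus ?thesis using g lam sx sy by simp
  next
    case False
    hence Fp: "sqrt F > 0" using F0 by simp
    have "F = sqrt F * sqrt F" using F0 by simp
    hence "(sx * sy * sqrt F / 2) * sqrt F \<le> ((g + lam) * sqrt (real (k * l))) * sqrt F"
      using main by (metis times_divide_eq_left mult.assoc)
    hence "sx * sy * sqrt F / 2 \<le> (g + lam) * sqrt (real (k * l))" using Fp
      by (rule mult_right_le_imp_le)
    thus ?thesis using sx sy by (simp add: field_simps)
  qed
  show ?thesis using goal unfolding F_def D_def .
qed

lemma mat3_entry:
  assumes "A \<in> carrier_mat m k" "B \<in> carrier_mat k l" "C \<in> carrier_mat l r" "a < m" "b < r"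
  shows "(A * B * C) $$ (a,b) = (\<Sum>j<l. (\<Sum>i<k. A $$ (a,i) * B $$ (i,j)) * C $$ (j,b))"
  using assms by (simp add: scalar_prod_def lessThan_atLeast0 sum_distrib_left sum_distrib_right mult.assoc sum.swap[of _ "{0..<l}"])

lemma cov_entry:
  assumes "X \<in> carrier_mat n p" "Y \<in> carrier_mat n q" "u < p" "v < q"
  shows "sample_cov X Y $$ (u,v) = (\<Sum>a<n. X $$ (a,u) * Y $$ (a,v)) / real n"
  using assms unfolding sample_cov_def by (simp add: scalar_prod_def lessThan_atLeast0)

lemma bij_pick: "finite S \<Longrightarrow> bij_betw (pick S) {..<card S} S"
proof -
  assume fin: "finite S"
  have inj: "inj_on (pick S) {..<card S}"
    by (intro inj_onI, metis lessThan_iff linorder_neqE_nat pick_mono_le less_irrefl)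
  have sub: "pick S ` {..<card S} \<subseteq> S" using pick_in_set_le by auto
  have "card (pick S ` {..<card S}) = card S" using card_image[OF inj] by simp
  hence "pick S ` {..<card S} = S" using card_subset_eq[OF fin sub] by simp
  thus ?thesis using inj unfolding bij_betw_def by simp
qed

lemma sum_pick:
  fixes g :: "nat \<Rightarrow> real"
  assumes S: "S \<subseteq> {..<p}" and z: "\<And>u. u < p \<Longrightarrow> u \<notin> S \<Longrightarrow> g u = 0"
  shows "(\<Sum>u<p. g u) = (\<Sum>i<card S. g (pick S i))"
proof -
  have fin: "finite S" using S finite_subset by blast
  have "(\<Sum>u<p. g u) = (\<Sum>u\<in>S. g u)" using S z by (intro sum.mono_neutral_right) auto
  also have "\<dots> = (\<Sum>i<card S. g (pick S i))"
    using sum.reindex_bij_betw[OF bij_pick[OF fin], of g] by simp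
  finally show ?thesis .
qed

lemma Gid:
  fixes X Y Bs :: "nat \<Rightarrow> nat \<Rightarrow> real"
  shows "(\<Sum>a<n. \<Sum>b<n. ((\<Sum>u'<p. \<Sum>v'<q. X a u' * Bs u' v' * Y b v') / real n - (if a = b then 1 else 0)) * X a u * Y b v) / real n
   = (\<Sum>v'<q. (\<Sum>u'<p. ((\<Sum>a<n. X a u * X a u') / real n) * Bs u' v') * ((\<Sum>b<n. Y b v' * Y b v) / real n))
     - (\<Sum>a<n. X a u * Y a v) / real n"
proof -
  have d: "(\<Sum>a<n. \<Sum>b<n. (if a = b then 1 else 0) * X a u * Y b v) = (\<Sum>a<n. X a u * Y a v)"
  proof (intro sum.cong refl)
    fix a assume "a \<in> {..<n}"
    have "(\<Sum>b<n. (if a = b then 1 else 0) * X a u * Y b v) = (\<Sum>b<n. if b = a then X a u * Y b v else 0)"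
      by (intro sum.cong) auto
    thus "(\<Sum>b<n. (if a = b then 1 else 0) * X a u * Y b v) = X a u * Y a v" using \<open>a \<in> {..<n}\<close> by simp
  qed
  have m: "(\<Sum>a<n. \<Sum>b<n. ((\<Sum>u'<p. \<Sum>v'<q. X a u' * Bs u' v' * Y b v') / real n) * X a u * Y b v)
    = (\<Sum>a<n. \<Sum>b<n. \<Sum>u'<p. \<Sum>v'<q. X a u * X a u' * Bs u' v' * Y b v' * Y b v / real n)"
    by (simp add: sum_distrib_left sum_distrib_right sum_divide_distrib algebra_simps)
  also have "\<dots> = (\<Sum>u'<p. \<Sum>v'<q. \<Sum>a<n. \<Sum>b<n. X a u * X a u' * Bs u' v' * Y b v' * Y b v / real n)"
    by (rule swap4)
  also have "\<dots> = (\<Sum>v'<q. \<Sum>u'<p. \<Sum>a<n. \<Sum>b<n. X a u * X a u' * Bs u' v' * Y b v' * Y b v / real n)"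
    by (rule sum.swap)
  also have "\<dots> = real n * (\<Sum>v'<q. (\<Sum>u'<p. ((\<Sum>a<n. X a u * X a u') / real n) * Bs u' v') * ((\<Sum>b<n. Y b v' * Y b v) / real n))"
    by (cases "n = 0") (simp_all add: sum_distrib_left sum_distrib_right sum_divide_distrib algebra_simps power2_eq_square)
  finally have m: "(\<Sum>a<n. \<Sum>b<n. ((\<Sum>u'<p. \<Sum>v'<q. X a u' * Bs u' v' * Y b v') / real n) * X a u * Y b v)
    = real n * (\<Sum>v'<q. (\<Sum>u'<p. ((\<Sum>a<n. X a u * X a u') / real n) * Bs u' v') * ((\<Sum>b<n. Y b v' * Y b v) / real n))" .
  have sp: "(\<Sum>a<n. \<Sum>b<n. ((\<Sum>u'<p. \<Sum>v'<q. X a u' * Bs u' v' * Y b v') / real n - (if a = b then 1 else 0)) * X a u * Y b v)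
    = (\<Sum>a<n. \<Sum>b<n. ((\<Sum>u'<p. \<Sum>v'<q. X a u' * Bs u' v' * Y b v') / real n) * X a u * Y b v)
      - (\<Sum>a<n. \<Sum>b<n. (if a = b then 1 else 0) * X a u * Y b v)"
    by (simp add: left_diff_distrib sum_subtractf)
  show ?thesis unfolding sp m d by (cases "n = 0") (simp_all add: diff_divide_distrib)
qed

lemma pick_lessThan: "a < n \<Longrightarrow> pick {..<n} a = a"
proof (induction a)
  case 0 thus ?case by (simp add: Least_equality)
next
  case (Suc a)
  hence "pick {..<n} a = a" by simp
  thus ?case using Suc.prems by simp (intro Least_equality; auto)
qed

lemma swap3:
  fixes f :: "nat \<Rightarrow> nat \<Rightarrow> nat \<Rightarrow> real"
  shows "(\<Sum>a<n. \<Sum>i<k. \<Sum>j<l. f a i j) = (\<Sum>i<k. \<Sum>j<l. \<Sum>a<n. f a i j)"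
proof -
  have "(\<Sum>a<n. \<Sum>i<k. \<Sum>j<l. f a i j) = (\<Sum>i<k. \<Sum>a<n. \<Sum>j<l. f a i j)" by (rule sum.swap)
  also have "\<dots> = (\<Sum>i<k. \<Sum>j<l. \<Sum>a<n. f a i j)" by (rule sum.cong[OF refl], rule sum.swap)
  finally show ?thesis .
qed

lemma gram:
  fixes x :: "nat \<Rightarrow> nat \<Rightarrow> real"
  assumes A: "A \<in> carrier_mat k k" and k: "k > 0" and n: "n > 0"
    and ent: "\<And>i i'. i < k \<Longrightarrow> i' < k \<Longrightarrow> A $$ (i,i') = (\<Sum>a<n. x a i * x a i') / real n"
  shows "real n * sigma_min A * (\<Sum>i<k. (z i)^2) \<le> (\<Sum>a<n. (\<Sum>i<k. x a i * z i)^2)"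
proof -
  have qfid: "qf A k w w = (\<Sum>a<n. (\<Sum>i<k. x a i * w i)^2) / real n" for w
  proof -
    have "qf A k w w = (\<Sum>i<k. \<Sum>i'<k. \<Sum>a<n. w i * x a i * x a i' * w i' / real n)"
      unfolding qf_def ip_def mv_def
      by (intro sum.cong refl) (simp add: ent sum_distrib_left sum_distrib_right sum_divide_distrib algebra_simps)
    also have "\<dots> = (\<Sum>a<n. \<Sum>i<k. \<Sum>i'<k. w i * x a i * x a i' * w i' / real n)" by (rule swap3[symmetric])
    also have "\<dots> = (\<Sum>a<n. (\<Sum>i<k. x a i * w i)^2) / real n"
      by (simp add: power2_eq_square sum_distrib_left sum_distrib_right sum_divide_distrib algebra_simps)
    finally show ?thesis .
  qed
  have sym: "A $$ (i,j) = A $$ (j,i)" if "i < k" "j < k" for i j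
    using that by (simp add: ent mult.commute)
  have psd: "qf A k w w \<ge> 0" for w unfolding qfid by (intro divide_nonneg_nonneg sum_nonneg) auto
  have "sigma_min A * ip k z z \<le> qf A k z z" by (rule sigma_bound[OF A k sym psd])
  hence "real n * (sigma_min A * ip k z z) \<le> real n * qf A k z z" using n by simp
  also have "real n * qf A k z z = (\<Sum>a<n. (\<Sum>i<k. x a i * z i)^2)" unfolding qfid using n by simp
  finally show ?thesis unfolding ip_def by (simp add: power2_eq_square mult.assoc)
qed

theorem mainTheorem7:
  fixes X Y Bstar Btilde :: "real mat" and n p q :: nat and Su Sv :: "nat set" and lam :: real
  assumes X: "X \<in> carrier_mat n p" and Y: "Y \<in> carrier_mat n q"
    and Bstar: "Bstar \<in> carrier_mat p q"
    and Su: "Su \<subseteq> {..<p}" and Sv: "Sv \<subseteq> {..<q}"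
    and supp: "\<forall>i<p. \<forall>j<q. Bstar $$ (i,j) \<noteq> 0 \<longrightarrow> i \<in> Su \<and> j \<in> Sv"
    and n_gt: "n > card Su * card Sv"
    and lam: "lam > 0"
    and sX: "sigma_min (submatrix (sample_cov X X) Su Su) > 0"
    and sY: "sigma_min (submatrix (sample_cov Y Y) Sv Sv) > 0"
    and Bt: "Btilde \<in> carrier_mat (card Su) (card Sv)"
    and minim: "\<forall>B \<in> carrier_mat (card Su) (card Sv).
        cca_objective (cols X Su) (cols Y Sv) lam Btilde \<le> cca_objective (cols X Su) (cols Y Sv) lam B"
  shows "frob_norm (Btilde - submatrix Bstar Su Sv)
    \<le> 2 * (max_abs_norm (sample_cov X Y - sample_cov X X * Bstar * sample_cov Y Y) + lam)
        / (sigma_min (submatrix (sample_cov X X) Su Su) * sigma_min (submatrix (sample_cov Y Y) Sv Sv))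
        * sqrt (real (card Su * card Sv))"
proof -
  define k where "k = card Su"
  define l where "l = card Sv"
  define B0 where "B0 = submatrix Bstar Su Sv"
  have cSu: "{i. i < p \<and> i \<in> Su} = Su" using Su by auto
  have cSv: "{i. i < q \<and> i \<in> Sv} = Sv" using Sv by auto
  have dX: "dim_row X = n" "dim_col X = p" using X by auto
  have dY: "dim_row Y = n" "dim_col Y = q" using Y by auto
  have dB: "dim_row Bstar = p" "dim_col Bstar = q" using Bstar by auto
  have B0c: "B0 \<in> carrier_mat k l" unfolding B0_def k_def l_def carrier_mat_def by (simp add: dim_submatrix dB cSu cSv)
  have B0e: "B0 $$ (i,j) = Bstar $$ (pick Su i, pick Sv j)" if "i < k" "j < l" for i j
    unfolding B0_def using that by (intro submatrix_index) (simp_all add: dB cSu cSv k_def l_def)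
  have Btc: "Btilde \<in> carrier_mat k l" using Bt unfolding k_def l_def .
  have frob: "frob_norm (Btilde - B0) = sqrt (\<Sum>i<k. \<Sum>j<l. (Btilde $$ (i,j) - Bstar $$ (pick Su i, pick Sv j))^2)"
  proof -
    have d: "dim_row (Btilde - B0) = k" "dim_col (Btilde - B0) = l" using B0c by auto
    show ?thesis unfolding frob_norm_def d using B0c Btc
      by (intro arg_cong[where f=sqrt] sum.cong refl) (simp add: B0e)
  qed
  show ?thesis
  proof (cases "k = 0 \<or> l = 0")
    case True
    thus ?thesis unfolding B0_def[symmetric] frob k_def[symmetric] l_def[symmetric] by auto
  next
    case False
    hence k: "k > 0" and l: "l > 0" by auto
    have n: "n > 0" using n_gt by simp
    define x where "x = (\<lambda>a i. X $$ (a, pick Su i))"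
    define y where "y = (\<lambda>b j. Y $$ (b, pick Sv j))"
    have pSu: "pick Su i \<in> Su" if "i < k" for i using that pick_in_set_le unfolding k_def by blast
    have pSv: "pick Sv j \<in> Sv" if "j < l" for j using that pick_in_set_le unfolding l_def by blast
    have pSu': "pick Su i < p" if "i < k" for i using pSu[OF that] Su by auto
    have pSv': "pick Sv j < q" if "j < l" for j using pSv[OF that] Sv by auto
    define XS where "XS = cols X Su"
    define YS where "YS = cols Y Sv"
    have cn: "{i. i < n \<and> i \<in> {..<n}} = {..<n}" by auto
    have XSc: "XS \<in> carrier_mat n k" unfolding XS_def cols_def carrier_mat_def by (simp add: dim_submatrix dX cSu cn k_def)
    have YSc: "YS \<in> carrier_mat n l" unfolding YS_def cols_def carrier_mat_def by (simp add: dim_submatrix dY cSv cn l_def)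
    have XSe: "XS $$ (a,i) = x a i" if "a < n" "i < k" for a i
      unfolding XS_def cols_def x_def using that
      by (subst submatrix_index) (simp_all add: dX cSu cn k_def pick_lessThan)
    have YSe: "YS $$ (b,j) = y b j" if "b < n" "j < l" for b j
      unfolding YS_def cols_def y_def using that
      by (subst submatrix_index) (simp_all add: dY cSv cn l_def pick_lessThan)
    have objeq: "cca_objective XS YS lam B = objf n k l lam x y (\<lambda>i j. B $$ (i,j))"
      if Bc: "B \<in> carrier_mat k l" for B
    proof -
      define M where "M = (1 / real (dim_row XS)) \<cdot>\<^sub>m (XS * B * transpose_mat YS) - 1\<^sub>m (dim_row XS)"
      have Mc: "M \<in> carrier_mat n n" unfolding M_def using XSc YSc Bc by auto
      have Me: "M $$ (a,b) = TT k l x y (\<lambda>i j. B $$ (i,j)) a b / real n - (if a = b then 1 else 0)"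
        if "a < n" "b < n" for a b
      proof -
        have "(XS * B * transpose_mat YS) $$ (a,b) = (\<Sum>j<l. (\<Sum>i<k. XS $$ (a,i) * B $$ (i,j)) * transpose_mat YS $$ (j,b))"
          using XSc Bc YSc that by (intro mat3_entry) auto
        also have "\<dots> = (\<Sum>j<l. \<Sum>i<k. x a i * B $$ (i,j) * y b j)"
          using that YSc by (simp add: XSe YSe sum_distrib_right)
        also have "\<dots> = TT k l x y (\<lambda>i j. B $$ (i,j)) a b" unfolding TT_def by (rule sum.swap)
        finally show ?thesis unfolding M_def using that XSc YSc Bc by simp
      qed
      have "(frob_norm M)^2 = (\<Sum>a<n. \<Sum>b<n. (M $$ (a,b))^2)"
        unfolding frob_norm_def using Mc by (simp add: sum_nonneg)
      also have "\<dots> = (\<Sum>a<n. \<Sum>b<n. (TT k l x y (\<lambda>i j. B $$ (i,j)) a b / real n - (if a = b then 1 else 0))^2)"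
        by (intro sum.cong refl) (simp add: Me)
      finally have fr: "(frob_norm M)^2 = \<dots>" .
      have l1: "l1_entry_norm B = (\<Sum>i<k. \<Sum>j<l. \<bar>B $$ (i,j)\<bar>)" unfolding l1_entry_norm_def using Bc by simp
      show ?thesis unfolding cca_objective_def M_def[symmetric] fr l1 objf_def ..
    qed
    define Bt where "Bt = (\<lambda>i j. Btilde $$ (i,j))"
    define B0f where "B0f = (\<lambda>i j. Bstar $$ (pick Su i, pick Sv j))"
    have B0f: "objf n k l lam x y B0f = objf n k l lam x y (\<lambda>i j. B0 $$ (i,j))"
      unfolding B0f_def by (intro objf_cong) (simp add: B0e)
    have "cca_objective XS YS lam Btilde \<le> cca_objective XS YS lam B0"
      using minim B0c unfolding XS_def YS_def k_def l_def by blast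
    hence opt: "objf n k l lam x y Bt \<le> objf n k l lam x y B0f"
      unfolding Bt_def B0f objeq[OF Btc] objeq[OF B0c] .
    define E where "E = sample_cov X Y - sample_cov X X * Bstar * sample_cov Y Y"
    define g where "g = max_abs_norm E"
    have SXc: "sample_cov X X \<in> carrier_mat p p" unfolding sample_cov_def using X by auto
    have SYc: "sample_cov Y Y \<in> carrier_mat q q" unfolding sample_cov_def using Y by auto
    have SXYc: "sample_cov X Y \<in> carrier_mat p q" unfolding sample_cov_def using X Y by auto
    have Ec: "E \<in> carrier_mat p q" unfolding E_def using SXc SYc SXYc Bstar by auto
    have finE: "finite ({0} \<union> {\<bar>E $$ (i,j)\<bar> | i j. i < dim_row E \<and> j < dim_col E})"
    proof -
      have "{\<bar>E $$ (i,j)\<bar> | i j. i < dim_row E \<and> j < dim_col E}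
          \<subseteq> (\<lambda>(i,j). \<bar>E $$ (i,j)\<bar>) ` ({..<dim_row E} \<times> {..<dim_col E})" by auto
      moreover have "finite ((\<lambda>(i,j). \<bar>E $$ (i,j)\<bar>) ` ({..<dim_row E} \<times> {..<dim_col E}))" by simp
      ultimately have "finite {\<bar>E $$ (i,j)\<bar> | i j. i < dim_row E \<and> j < dim_col E}" by (rule finite_subset)
      thus ?thesis by simp
    qed
    have g0: "g \<ge> 0" unfolding g_def max_abs_norm_def using finE by (intro Max_ge) auto
    have gE: "\<bar>E $$ (u,v)\<bar> \<le> g" if "u < p" "v < q" for u v
      unfolding g_def max_abs_norm_def using finE that Ec by (intro Max_ge) auto
    have TTB0: "TT k l x y B0f a b = (\<Sum>u'<p. \<Sum>v'<q. X $$ (a,u') * Bstar $$ (u',v') * Y $$ (b,v'))" for a b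
    proof -
      have "(\<Sum>u'<p. \<Sum>v'<q. X $$ (a,u') * Bstar $$ (u',v') * Y $$ (b,v'))
          = (\<Sum>i<k. \<Sum>v'<q. X $$ (a,pick Su i) * Bstar $$ (pick Su i,v') * Y $$ (b,v'))"
        unfolding k_def using Su
      proof (rule sum_pick)
        fix u assume "u < p" "u \<notin> Su"
        thus "(\<Sum>v'<q. X $$ (a,u) * Bstar $$ (u,v') * Y $$ (b,v')) = 0" using supp by (intro sum.neutral) auto
      qed
      also have "\<dots> = (\<Sum>i<k. \<Sum>j<l. X $$ (a,pick Su i) * Bstar $$ (pick Su i,pick Sv j) * Y $$ (b,pick Sv j))"
      proof (rule sum.cong[OF refl])
        fix i assume "i \<in> {..<k}"
        hence ip: "pick Su i < p" using pSu' by auto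
        show "(\<Sum>v'<q. X $$ (a,pick Su i) * Bstar $$ (pick Su i,v') * Y $$ (b,v'))
          = (\<Sum>j<l. X $$ (a,pick Su i) * Bstar $$ (pick Su i,pick Sv j) * Y $$ (b,pick Sv j))"
          unfolding l_def using Sv
        proof (rule sum_pick)
          fix v assume "v < q" "v \<notin> Sv"
          thus "X $$ (a,pick Su i) * Bstar $$ (pick Su i,v) * Y $$ (b,v) = 0" using supp ip by auto
        qed
      qed
      finally show ?thesis unfolding TT_def B0f_def x_def y_def by simp
    qed
    have Eent: "E $$ (u,v) = (\<Sum>a<n. X $$ (a,u) * Y $$ (a,v)) / real n -
       (\<Sum>v'<q. (\<Sum>u'<p. ((\<Sum>a<n. X $$ (a,u) * X $$ (a,u')) / real n) * Bstar $$ (u',v')) * ((\<Sum>b<n. Y $$ (b,v') * Y $$ (b,v)) / real n))"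
      if "u < p" "v < q" for u v
    proof -
      have "(sample_cov X X * Bstar * sample_cov Y Y) $$ (u,v)
         = (\<Sum>v'<q. (\<Sum>u'<p. sample_cov X X $$ (u,u') * Bstar $$ (u',v')) * sample_cov Y Y $$ (v',v))"
        using SXc Bstar SYc that by (intro mat3_entry)
      also have "\<dots> = (\<Sum>v'<q. (\<Sum>u'<p. ((\<Sum>a<n. X $$ (a,u) * X $$ (a,u')) / real n) * Bstar $$ (u',v')) * ((\<Sum>b<n. Y $$ (b,v') * Y $$ (b,v)) / real n))"
        using that by (intro sum.cong refl arg_cong2[where f="(*)"]) (simp_all add: cov_entry[OF X X] cov_entry[OF Y Y])
      finally show ?thesis unfolding E_def using that SXc SYc Bstar SXYc by (simp add: cov_entry[OF X Y])
    qed
    have Gb: "\<bar>(\<Sum>a<n. \<Sum>b<n. (TT k l x y B0f a b / real n - (if a = b then 1 else 0)) * x a i * y b j) / real n\<bar> \<le> g"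
      if "i < k" "j < l" for i j
    proof -
      have "(\<Sum>a<n. \<Sum>b<n. (TT k l x y B0f a b / real n - (if a = b then 1 else 0)) * x a i * y b j) / real n
          = - E $$ (pick Su i, pick Sv j)"
        unfolding TTB0 unfolding x_def y_def
        using Gid[where X="\<lambda>a u. X $$ (a,u)" and Bs="\<lambda>u v. Bstar $$ (u,v)" and Y="\<lambda>b v. Y $$ (b,v)" and n=n and p=p and q=q and u="pick Su i" and v="pick Sv j"]
          Eent[OF pSu'[OF that(1)] pSv'[OF that(2)]] by simp
      thus ?thesis using gE[OF pSu'[OF that(1)] pSv'[OF that(2)]] by simp
    qed
    define AX where "AX = submatrix (sample_cov X X) Su Su"
    define AY where "AY = submatrix (sample_cov Y Y) Sv Sv"
    have AXc: "AX \<in> carrier_mat k k" unfolding AX_def carrier_mat_def using SXc by (simp add: dim_submatrix cSu k_def)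
    have AYc: "AY \<in> carrier_mat l l" unfolding AY_def carrier_mat_def using SYc by (simp add: dim_submatrix cSv l_def)
    have AXe: "AX $$ (i,i') = (\<Sum>a<n. x a i * x a i') / real n" if "i < k" "i' < k" for i i'
    proof -
      have "AX $$ (i,i') = sample_cov X X $$ (pick Su i, pick Su i')"
        unfolding AX_def using that SXc by (intro submatrix_index) (simp_all add: cSu k_def)
      thus ?thesis using cov_entry[OF X X pSu'[OF that(1)] pSu'[OF that(2)]] unfolding x_def by simp
    qed
    have AYe: "AY $$ (j,j') = (\<Sum>b<n. y b j * y b j') / real n" if "j < l" "j' < l" for j j'
    proof -
      have "AY $$ (j,j') = sample_cov Y Y $$ (pick Sv j, pick Sv j')"
        unfolding AY_def using that SYc by (intro submatrix_index) (simp_all add: cSv l_def)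
      thus ?thesis using cov_entry[OF Y Y pSv'[OF that(1)] pSv'[OF that(2)]] unfolding y_def by simp
    qed
    have hx: "real n * sigma_min AX * (\<Sum>i<k. (z i)^2) \<le> (\<Sum>a<n. (\<Sum>i<k. x a i * z i)^2)" for z
      by (rule gram[OF AXc k n AXe])
    have hy: "real n * sigma_min AY * (\<Sum>j<l. (z j)^2) \<le> (\<Sum>b<n. (\<Sum>j<l. y b j * z j)^2)" for z
      by (rule gram[OF AYc l n AYe])
    have res: "sqrt (\<Sum>i<k. \<Sum>j<l. (Bt i j - B0f i j)^2) \<le> 2 * (g + lam) / (sigma_min AX * sigma_min AY) * sqrt (real (k * l))"
      by (rule core[OF n _ g0 opt Gb _ _ hx hy]) (use lam sX sY in \<open>simp_all add: AX_def AY_def\<close>)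
    have "frob_norm (Btilde - B0) \<le> 2 * (g + lam) / (sigma_min AX * sigma_min AY) * sqrt (real (k * l))"
      using res unfolding frob Bt_def B0f_def .
    thus ?thesis unfolding B0_def g_def E_def AX_def AY_def k_def l_def .
  qed
qed

end
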